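(* Let $n_1,\dots,n_k>1$ be integers and let $(\mathbb{Z},\Lambda)$ be the product of odometers described in the context, and put $n=(n_1,\dots,n_k)$, $n^p=\prod_{i=1}^kn_i^{p_i}$ for $p\in\mathbb{Z}^k$. Then $$\mathrm{Per}_{\mathbb{Z},\Lambda}=\mathrm{Per}_\Lambda=\{p\in\mathbb{Z}^k:n^p=1\}.$$
   Context: Let $k\ge1$. A $k$-graph is a countable small category $\Lambda$ together with a functor $d:\Lambda\to\mathbb{N}^k$ (the degree map) with the unique factorization property: for every $\mu\in\Lambda$ and $m,n\in\mathbb{N}^k$ with $d(\mu)=m+n$ there are unique $\alpha,\beta\in\Lambda$ with $d(\alpha)=m$, $d(\beta)=n$ and $\mu=\alpha\beta$. Write $\Lambda^n=d^{-1}(n)$, $\Lambda^0$ the vertices, $r,s$ range and source; $e_1,\dots,e_k$ is the standard basis of $\mathbb{N}^k$. Infinite paths: let $\Omega_k=\{(p,q)\in\mathbb{N}^k\times\mathbb{N}^k:p\le q\}$ with $r(p,q)=(p,p)$, $s(p,q)=(q,q)$, $(p,q)(q,m)=(p,m)$, $d(p,q)=q-p$. An infinite path is a degree-preserving functor $x:\Omega_k\to\Lambda$; $\Lambda^\infty$ is the set of infinite paths, $v\Lambda^\infty=\{x:x(0,0)=v\}$, and for $\mu\in\Lambda$, $x\in s(\mu)\Lambda^\infty$, $\mu x$ is the unique infinite path $y$ with $y(0,d(\mu))=\mu$ and $y(d(\mu)+p,d(\mu)+q)=x(p,q)$ for all $p\le q$. Self-similar actions: for a group $G$, a self-similar action $(G,\Lambda)$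 consists of an action of $G$ on $\Lambda$ by automorphisms (bijections preserving $d$, $r$, $s$), written $g\cdot\mu$, and a restriction map $(g,\mu)\mapsto g|_\mu\in G$ such that for all $g,h\in G$, $v\in\Lambda^0$ and $\mu,\nu$ with $s(\mu)=r(\nu)$: $g\cdot(\mu\nu)=(g\cdot\mu)(g|_\mu\cdot\nu)$; $g|_v=g$; $g|_{\mu\nu}=(g|_\mu)|_\nu$; $1_G|_\mu=1_G$; $(gh)|_\mu=g|_{h\cdot\mu}\,h|_\mu$. For $x\in\Lambda^\infty$, $(g\cdot x)(p,q)=g|_{x(0,p)}\cdot x(p,q)$. Products of odometers: $\Lambda$ is a $k$-graph with a single vertex such that $\Lambda^{e_i}=\{x^i_{\mathfrak s}:0\le\mathfrak{s}\le n_i-1\}$ for $1\le i\le k$, with factorization rules $x^i_{\mathfrak s}x^j_{\mathfrak t}=x^j_{\mathfrak t'}x^i_{\mathfrak s'}$ for $1\le i<j\le k$ whenever $\mathfrak{s},\mathfrak{s}'\in\{0,\dots,n_i-1\}$, $\mathfrak{t},\mathfrak{t}'\in\{0,\dots,n_j-1\}$ and $\mathfrak{s}+\mathfrak{t}n_i=\mathfrak{t}'+\mathfrak{s}'n_j$. The group $\mathbb{Z}$ acts self-similarly on $\Lambda$, determined by $1\cdot x^i_{\mathfrak s}=x^i_{(\mathfrak{s}+1)\bmod n_i}$ and $1|_{x^i_{\mathfrak s}}=0$ if $\mathfrak{s}<n_i-1$, $1|_{x^i_{n_i-1}}=1$. This action is pseudo free, locally faithful, satisfies the finite-state condition, and $\Lambda$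 is strongly connected and finite. Cycline triples and periodicity: a triple $(\mu,g,\nu)\in\Lambda\times G\times\Lambda$ with $s(\mu)=g\cdot s(\nu)$ is cycline if $\mu(g\cdot x)=\nu x$ for all $x\in s(\nu)\Lambda^\infty$. $\mathrm{Per}_{G,\Lambda}=\{d(\mu)-d(\nu):(\mu,g,\nu)\text{ cycline}\}\subseteq\mathbb{Z}^k$, and $\mathrm{Per}_\Lambda=\{d(\mu)-d(\nu):(\mu,1_G,\nu)\text{ cycline}\}$ (i.e. from pairs $(\mu,\nu)$ with $\mu x=\nu x$ for all $x\in s(\nu)\Lambda^\infty$). *)

theory Defs
  imports Complex_Main "HOL-Library.Countable_Set"
begin

text \<open>The rank k is a natural number; coordinates are indexed by
  0,...,k-1 (the paper's index i corresponds to i-1 here).  An element of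
  N^k (resp. Z^k) is a function nat => nat (resp. nat => int) vanishing at all
  indices >= k.  The group G is (int,+,0); 1_G is 0.\<close>

definition Nk :: "nat \<Rightarrow> (nat \<Rightarrow> nat) set" where
  "Nk k = {m. \<forall>j\<ge>k. m j = 0}"

definition Zk :: "nat \<Rightarrow> (nat \<Rightarrow> int) set" where
  "Zk k = {p. \<forall>j\<ge>k. p j = 0}"

definition unitvec :: "nat \<Rightarrow> nat \<Rightarrow> nat" where
  "unitvec i = (\<lambda>j. if j = i then 1 else 0)"

text \<open>A category presented by its set of morphisms, range, source, composition
  (comp a b = ab, defined when src a = rng b) and a degree map.\<close>

record 'a kgraph =
  Mor :: "'a set"
  rng :: "'a \<Rightarrow> 'a"
  src :: "'a \<Rightarrow> 'a"
  cmp :: "'a \<Rightarrow> 'a \<Rightarrow> 'a"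
  deg :: "'a \<Rightarrow> nat \<Rightarrow> nat"

definition vertices :: "('a, 'b) kgraph_scheme \<Rightarrow> 'a set" where
  "vertices L = {v \<in> Mor L. deg L v = (\<lambda>_. 0)}"

definition is_kgraph :: "nat \<Rightarrow> ('a, 'b) kgraph_scheme \<Rightarrow> bool" where
  "is_kgraph k L \<longleftrightarrow>
     countable (Mor L) \<and>
     \<comment> \<open>small category, objects identified with identity morphisms\<close>
     (\<forall>a\<in>Mor L. rng L a \<in> Mor L \<and> src L a \<in> Mor L \<and>
        rng L (rng L a) = rng L a \<and> src L (rng L a) = rng L a \<and>
        rng L (src L a) = src L a \<and> src L (src L a) = src L a \<and>
        cmp L (rng L a) a = a \<and> cmp L a (src L a) = a) \<and>
     (\<forall>a\<in>Mor L. \<forall>b\<in>Mor L. src L a = rng L b \<longrightarrow>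
        cmp L a b \<in> Mor L \<and> rng L (cmp L a b) = rng L a \<and> src L (cmp L a b) = src L b) \<and>
     (\<forall>a\<in>Mor L. \<forall>b\<in>Mor L. \<forall>c\<in>Mor L. src L a = rng L b \<longrightarrow> src L b = rng L c \<longrightarrow>
        cmp L (cmp L a b) c = cmp L a (cmp L b c)) \<and>
     \<comment> \<open>degree functor into N^k\<close>
     (\<forall>a\<in>Mor L. deg L a \<in> Nk k) \<and>
     (\<forall>a\<in>Mor L. deg L (rng L a) = (\<lambda>_. 0)) \<and>
     (\<forall>a\<in>Mor L. \<forall>b\<in>Mor L. src L a = rng L b \<longrightarrow>
        deg L (cmp L a b) = (\<lambda>j. deg L a j + deg L b j)) \<and>
     \<comment> \<open>unique factorisation property\<close>
     (\<forall>a\<in>Mor L. \<forall>m\<in>Nk k. \<forall>n\<in>Nk k. deg L a = (\<lambda>j. m j + n j) \<longrightarrow>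
        (\<exists>!(\<alpha>, \<beta>). \<alpha> \<in> Mor L \<and> \<beta> \<in> Mor L \<and> src L \<alpha> = rng L \<beta> \<and>
            deg L \<alpha> = m \<and> deg L \<beta> = n \<and> a = cmp L \<alpha> \<beta>))"

text \<open>Infinite paths: degree-preserving functors from Omega_k, represented as
  functions of (p,q), extensional (undefined) outside Omega_k.\<close>

definition in_Omega :: "nat \<Rightarrow> (nat \<Rightarrow> nat) \<Rightarrow> (nat \<Rightarrow> nat) \<Rightarrow> bool" where
  "in_Omega k p q \<longleftrightarrow> p \<in> Nk k \<and> q \<in> Nk k \<and> p \<le> q"

definition infpaths :: "nat \<Rightarrow> ('a, 'b) kgraph_scheme
    \<Rightarrow> ((nat \<Rightarrow> nat) \<Rightarrow> (nat \<Rightarrow> nat) \<Rightarrow> 'a) set" where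
  "infpaths k L = {x.
     (\<forall>p q. in_Omega k p q \<longrightarrow>
        x p q \<in> Mor L \<and> deg L (x p q) = (\<lambda>j. q j - p j) \<and>
        rng L (x p q) = x p p \<and> src L (x p q) = x q q) \<and>
     (\<forall>p q m. in_Omega k p q \<longrightarrow> in_Omega k q m \<longrightarrow> cmp L (x p q) (x q m) = x p m) \<and>
     (\<forall>p q. \<not> in_Omega k p q \<longrightarrow> x p q = undefined)}"

definition infpaths_from :: "nat \<Rightarrow> ('a, 'b) kgraph_scheme \<Rightarrow> 'a
    \<Rightarrow> ((nat \<Rightarrow> nat) \<Rightarrow> (nat \<Rightarrow> nat) \<Rightarrow> 'a) set" where
  "infpaths_from k L v = {x \<in> infpaths k L. x (\<lambda>_. 0) (\<lambda>_. 0) = v}"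

definition prepend :: "nat \<Rightarrow> ('a, 'b) kgraph_scheme \<Rightarrow> 'a
    \<Rightarrow> ((nat \<Rightarrow> nat) \<Rightarrow> (nat \<Rightarrow> nat) \<Rightarrow> 'a) \<Rightarrow> ((nat \<Rightarrow> nat) \<Rightarrow> (nat \<Rightarrow> nat) \<Rightarrow> 'a)" where
  "prepend k L \<mu> x = (THE y. y \<in> infpaths k L \<and> y (\<lambda>_. 0) (deg L \<mu>) = \<mu> \<and>
      (\<forall>p q. in_Omega k p q \<longrightarrow>
         y (\<lambda>j. deg L \<mu> j + p j) (\<lambda>j. deg L \<mu> j + q j) = x p q))"

definition self_similar_int :: "nat \<Rightarrow> ('a, 'b) kgraph_scheme
    \<Rightarrow> (int \<Rightarrow> 'a \<Rightarrow> 'a) \<Rightarrow> (int \<Rightarrow> 'a \<Rightarrow> int) \<Rightarrow> bool" where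
  "self_similar_int k L act res \<longleftrightarrow>
     \<comment> \<open>group action by automorphisms\<close>
     (\<forall>a\<in>Mor L. act 0 a = a) \<and>
     (\<forall>g h. \<forall>a\<in>Mor L. act (g + h) a = act g (act h a)) \<and>
     (\<forall>g. bij_betw (act g) (Mor L) (Mor L)) \<and>
     (\<forall>g. \<forall>a\<in>Mor L. deg L (act g a) = deg L a \<and>
        rng L (act g a) = act g (rng L a) \<and> src L (act g a) = act g (src L a)) \<and>
     \<comment> \<open>self-similarity axioms\<close>
     (\<forall>g. \<forall>a\<in>Mor L. \<forall>b\<in>Mor L. src L a = rng L b \<longrightarrow>
        act g (cmp L a b) = cmp L (act g a) (act (res g a) b)) \<and>
     (\<forall>g. \<forall>v\<in>vertices L. res g v = g) \<and>
     (\<forall>g. \<forall>a\<in>Mor L. \<forall>b\<in>Mor L. src L a = rng L b \<longrightarrow>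
        res g (cmp L a b) = res (res g a) b) \<and>
     (\<forall>a\<in>Mor L. res 0 a = 0) \<and>
     (\<forall>g h. \<forall>a\<in>Mor L. res (g + h) a = res g (act h a) + res h a)"

definition act_inf :: "nat \<Rightarrow> (int \<Rightarrow> 'a \<Rightarrow> 'a) \<Rightarrow> (int \<Rightarrow> 'a \<Rightarrow> int) \<Rightarrow> int
    \<Rightarrow> ((nat \<Rightarrow> nat) \<Rightarrow> (nat \<Rightarrow> nat) \<Rightarrow> 'a) \<Rightarrow> ((nat \<Rightarrow> nat) \<Rightarrow> (nat \<Rightarrow> nat) \<Rightarrow> 'a)" where
  "act_inf k act res g x = (\<lambda>p q. if in_Omega k p q
       then act (res g (x (\<lambda>_. 0) p)) (x p q) else undefined)"

definition cycline :: "nat \<Rightarrow> ('a, 'b) kgraph_scheme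
    \<Rightarrow> (int \<Rightarrow> 'a \<Rightarrow> 'a) \<Rightarrow> (int \<Rightarrow> 'a \<Rightarrow> int) \<Rightarrow> 'a \<Rightarrow> int \<Rightarrow> 'a \<Rightarrow> bool" where
  "cycline k L act res \<mu> g \<nu> \<longleftrightarrow>
     \<mu> \<in> Mor L \<and> \<nu> \<in> Mor L \<and> src L \<mu> = act g (src L \<nu>) \<and>
     (\<forall>x\<in>infpaths_from k L (src L \<nu>).
        prepend k L \<mu> (act_inf k act res g x) = prepend k L \<nu> x)"

definition degdiff :: "('a, 'b) kgraph_scheme \<Rightarrow> 'a \<Rightarrow> 'a \<Rightarrow> nat \<Rightarrow> int" where
  "degdiff L \<mu> \<nu> = (\<lambda>j. int (deg L \<mu> j) - int (deg L \<nu> j))"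

definition Per_GL :: "nat \<Rightarrow> ('a, 'b) kgraph_scheme
    \<Rightarrow> (int \<Rightarrow> 'a \<Rightarrow> 'a) \<Rightarrow> (int \<Rightarrow> 'a \<Rightarrow> int) \<Rightarrow> (nat \<Rightarrow> int) set" where
  "Per_GL k L act res = {degdiff L \<mu> \<nu> | \<mu> g \<nu>. cycline k L act res \<mu> g \<nu>}"

definition Per_L :: "nat \<Rightarrow> ('a, 'b) kgraph_scheme
    \<Rightarrow> (int \<Rightarrow> 'a \<Rightarrow> 'a) \<Rightarrow> (int \<Rightarrow> 'a \<Rightarrow> int) \<Rightarrow> (nat \<Rightarrow> int) set" where
  "Per_L k L act res = {degdiff L \<mu> \<nu> | \<mu> \<nu>. cycline k L act res \<mu> 0 \<nu>}"

definition product_of_odometers :: "nat \<Rightarrow> (nat \<Rightarrow> nat) \<Rightarrow> ('a, 'b) kgraph_scheme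
    \<Rightarrow> (nat \<Rightarrow> nat \<Rightarrow> 'a) \<Rightarrow> (int \<Rightarrow> 'a \<Rightarrow> 'a) \<Rightarrow> (int \<Rightarrow> 'a \<Rightarrow> int) \<Rightarrow> bool" where
  "product_of_odometers k n L x act res \<longleftrightarrow>
     is_kgraph k L \<and>
     (\<exists>v. vertices L = {v}) \<and>
     (\<forall>i<k. {a \<in> Mor L. deg L a = unitvec i} = x i ` {..<n i} \<and> inj_on (x i) {..<n i}) \<and>
     (\<forall>i j s s' t t'. i < j \<longrightarrow> j < k \<longrightarrow> s < n i \<longrightarrow> s' < n i \<longrightarrow> t < n j \<longrightarrow> t' < n j \<longrightarrow>
        s + t * n i = t' + s' * n j \<longrightarrow>
        cmp L (x i s) (x j t) = cmp L (x j t') (x i s')) \<and>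
     self_similar_int k L act res \<and>
     (\<forall>i<k. \<forall>s<n i. act 1 (x i s) = x i ((s + 1) mod n i) \<and>
        res 1 (x i s) = (if s < n i - 1 then 0 else 1))"

end

theory Submission
  imports Defs
begin

locale odo =
  fixes k :: nat and n :: "nat \<Rightarrow> nat" and L :: "('a, 'b) kgraph_scheme"
    and x :: "nat \<Rightarrow> nat \<Rightarrow> 'a" and act :: "int \<Rightarrow> 'a \<Rightarrow> 'a" and res :: "int \<Rightarrow> 'a \<Rightarrow> int"
  assumes npos: "\<forall>i<k. n i > 1"
    and po: "product_of_odometers k n L x act res"
begin

lemma kg: "is_kgraph k L" using po unfolding product_of_odometers_def by auto
lemma ss: "self_similar_int k L act res" using po unfolding product_of_odometers_def by auto

definition v where "v = (THE v. vertices L = {v})"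

lemma vert: "vertices L = {v}"
proof -
  obtain w where "vertices L = {w}" using po unfolding product_of_odometers_def by auto
  then show ?thesis unfolding v_def by simp
qed

lemma v_Mor: "v \<in> Mor L" and deg_v: "deg L v = (\<lambda>_. 0)"
  using vert unfolding vertices_def by auto

lemma rng_Mor: "a \<in> Mor L \<Longrightarrow> rng L a = v"
proof -
  assume a: "a \<in> Mor L"
  then have "rng L a \<in> Mor L" "deg L (rng L a) = (\<lambda>_. 0)" using kg unfolding is_kgraph_def by auto
  then have "rng L a \<in> vertices L" unfolding vertices_def by auto
  then show ?thesis using vert by auto
qed

lemma src_Mor: "a \<in> Mor L \<Longrightarrow> src L a = v"
proof -
  assume a: "a \<in> Mor L"
  then have s: "src L a \<in> Mor L" "rng L (src L a) = src L a" using kg unfolding is_kgraph_def by auto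
  then show ?thesis using rng_Mor by metis
qed

lemma kg_cmp: "\<forall>a\<in>Mor L. \<forall>b\<in>Mor L. src L a = rng L b \<longrightarrow>
        cmp L a b \<in> Mor L \<and> rng L (cmp L a b) = rng L a \<and> src L (cmp L a b) = src L b"
  using kg unfolding is_kgraph_def by (elim conjE) assumption

lemma kg_assoc: "\<forall>a\<in>Mor L. \<forall>b\<in>Mor L. \<forall>c\<in>Mor L. src L a = rng L b \<longrightarrow> src L b = rng L c \<longrightarrow>
        cmp L (cmp L a b) c = cmp L a (cmp L b c)"
  using kg unfolding is_kgraph_def by (elim conjE) assumption

lemma kg_deg: "\<forall>a\<in>Mor L. \<forall>b\<in>Mor L. src L a = rng L b \<longrightarrow>
        deg L (cmp L a b) = (\<lambda>j. deg L a j + deg L b j)"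
  using kg unfolding is_kgraph_def by (elim conjE) assumption

lemma kg_id: "\<forall>a\<in>Mor L. rng L a \<in> Mor L \<and> src L a \<in> Mor L \<and>
        rng L (rng L a) = rng L a \<and> src L (rng L a) = rng L a \<and>
        rng L (src L a) = src L a \<and> src L (src L a) = src L a \<and>
        cmp L (rng L a) a = a \<and> cmp L a (src L a) = a"
  using kg unfolding is_kgraph_def by (elim conjE) assumption

lemma kg_uf: "\<forall>a\<in>Mor L. \<forall>m\<in>Nk k. \<forall>n\<in>Nk k. deg L a = (\<lambda>j. m j + n j) \<longrightarrow>
        (\<exists>!(\<alpha>, \<beta>). \<alpha> \<in> Mor L \<and> \<beta> \<in> Mor L \<and> src L \<alpha> = rng L \<beta> \<and>
            deg L \<alpha> = m \<and> deg L \<beta> = n \<and> a = cmp L \<alpha> \<beta>)"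
  using kg unfolding is_kgraph_def by (elim conjE) assumption

lemma cmp_Mor: "a \<in> Mor L \<Longrightarrow> b \<in> Mor L \<Longrightarrow> cmp L a b \<in> Mor L"
  using kg_cmp src_Mor rng_Mor by simp

lemma cmp_deg: "a \<in> Mor L \<Longrightarrow> b \<in> Mor L \<Longrightarrow> deg L (cmp L a b) = (\<lambda>j. deg L a j + deg L b j)"
  using kg_deg src_Mor rng_Mor by simp

lemma cmp_assoc: "a \<in> Mor L \<Longrightarrow> b \<in> Mor L \<Longrightarrow> c \<in> Mor L \<Longrightarrow> cmp L (cmp L a b) c = cmp L a (cmp L b c)"
  using kg_assoc src_Mor rng_Mor by simp

lemma deg_Nk: "a \<in> Mor L \<Longrightarrow> deg L a \<in> Nk k"
  using kg unfolding is_kgraph_def by auto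

lemma cmp_v: "a \<in> Mor L \<Longrightarrow> cmp L v a = a"
  using kg_id rng_Mor by metis

lemma cmp_v2: "a \<in> Mor L \<Longrightarrow> cmp L a v = a"
  using kg_id src_Mor by metis

lemma UF_ex:
  assumes "a \<in> Mor L" "m \<in> Nk k" "m' \<in> Nk k" "deg L a = (\<lambda>j. m j + m' j)"
  shows "\<exists>\<alpha> \<beta>. \<alpha> \<in> Mor L \<and> \<beta> \<in> Mor L \<and> deg L \<alpha> = m \<and> deg L \<beta> = m' \<and> a = cmp L \<alpha> \<beta>"
proof -
  have "\<exists>!(\<alpha>, \<beta>). \<alpha> \<in> Mor L \<and> \<beta> \<in> Mor L \<and> src L \<alpha> = rng L \<beta> \<and>
            deg L \<alpha> = m \<and> deg L \<beta> = m' \<and> a = cmp L \<alpha> \<beta>"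
    using kg_uf assms by blast
  then obtain w where "case w of (\<alpha>, \<beta>) \<Rightarrow> \<alpha> \<in> Mor L \<and> \<beta> \<in> Mor L \<and> src L \<alpha> = rng L \<beta> \<and>
            deg L \<alpha> = m \<and> deg L \<beta> = m' \<and> a = cmp L \<alpha> \<beta>" by (rule ex1E) blast
  then show ?thesis by (cases w) blast
qed

lemma UF_un:
  assumes "a \<in> Mor L" "b \<in> Mor L" "a' \<in> Mor L" "b' \<in> Mor L"
    "deg L a = deg L a'" "deg L b = deg L b'" "cmp L a b = cmp L a' b'"
  shows "a = a' \<and> b = b'"
proof -
  let ?c = "cmp L a b"
  have "?c \<in> Mor L" using assms cmp_Mor by auto
  moreover have "deg L ?c = (\<lambda>j. deg L a j + deg L b j)" using assms cmp_deg by auto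
  ultimately have "\<exists>!(\<alpha>, \<beta>). \<alpha> \<in> Mor L \<and> \<beta> \<in> Mor L \<and> src L \<alpha> = rng L \<beta> \<and>
            deg L \<alpha> = deg L a \<and> deg L \<beta> = deg L b \<and> ?c = cmp L \<alpha> \<beta>"
    using kg_uf assms deg_Nk by blast
  then obtain w where w: "\<forall>y. (case y of (\<alpha>, \<beta>) \<Rightarrow> \<alpha> \<in> Mor L \<and> \<beta> \<in> Mor L \<and> src L \<alpha> = rng L \<beta> \<and>
            deg L \<alpha> = deg L a \<and> deg L \<beta> = deg L b \<and> ?c = cmp L \<alpha> \<beta>) \<longrightarrow> y = w"
    by (rule ex1E) blast
  have "(a, b) = w" using w[rule_format, of "(a, b)"] assms src_Mor rng_Mor by simp
  moreover have "(a', b') = w" using w[rule_format, of "(a', b')"] assms src_Mor rng_Mor by simp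
  ultimately have "(a, b) = (a', b')" by simp
  then show ?thesis by simp
qed

lemma act0: "a \<in> Mor L \<Longrightarrow> act 0 a = a" using ss unfolding self_similar_int_def by auto
lemma act_add: "a \<in> Mor L \<Longrightarrow> act (g + h) a = act g (act h a)" using ss unfolding self_similar_int_def by auto
lemma act_Mor: "a \<in> Mor L \<Longrightarrow> act g a \<in> Mor L" using ss unfolding self_similar_int_def bij_betw_def by blast
lemma act_deg: "a \<in> Mor L \<Longrightarrow> deg L (act g a) = deg L a" using ss unfolding self_similar_int_def by auto
lemma act_cmp: "a \<in> Mor L \<Longrightarrow> b \<in> Mor L \<Longrightarrow> act g (cmp L a b) = cmp L (act g a) (act (res g a) b)"
  using ss src_Mor rng_Mor unfolding self_similar_int_def by metis
lemma res_v: "res g v = g" using ss vert unfolding self_similar_int_def by auto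
lemma res_cmp: "a \<in> Mor L \<Longrightarrow> b \<in> Mor L \<Longrightarrow> res g (cmp L a b) = res (res g a) b"
  using ss src_Mor rng_Mor unfolding self_similar_int_def by metis
lemma res0: "a \<in> Mor L \<Longrightarrow> res 0 a = 0" using ss unfolding self_similar_int_def by auto
lemma res_add: "a \<in> Mor L \<Longrightarrow> res (g + h) a = res g (act h a) + res h a"
  using ss unfolding self_similar_int_def by auto

lemma act_v: "act g v = v"
proof -
  have "act g v \<in> Mor L" "deg L (act g v) = (\<lambda>_. 0)" using act_Mor act_deg v_Mor deg_v by auto
  then show ?thesis using vert unfolding vertices_def by auto
qed

lemma edge: "i < k \<Longrightarrow> s < n i \<Longrightarrow> x i s \<in> Mor L \<and> deg L (x i s) = unitvec i"
  using po unfolding product_of_odometers_def by blast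

lemma edge_inj: "i < k \<Longrightarrow> s < n i \<Longrightarrow> t < n i \<Longrightarrow> x i s = x i t \<Longrightarrow> s = t"
  using po unfolding product_of_odometers_def inj_on_def by blast

lemma edge_all: "i < k \<Longrightarrow> a \<in> Mor L \<Longrightarrow> deg L a = unitvec i \<Longrightarrow> \<exists>s<n i. a = x i s"
  using po unfolding product_of_odometers_def by blast

lemma edge1: "i < k \<Longrightarrow> s < n i \<Longrightarrow> act 1 (x i s) = x i ((s + 1) mod n i) \<and>
        res 1 (x i s) = (if s < n i - 1 then 0 else 1)"
  using po unfolding product_of_odometers_def by blast

lemma edge_act:
  assumes i: "i < k"
  shows "act (int m) (x i 0) = x i (m mod n i) \<and> res (int m) (x i 0) = int (m div n i)"
proof (induction m)
  case 0
  have "n i > 1" using npos i by auto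
  then show ?case using act0 res0 edge[OF i] by auto
next
  case (Suc m)
  have ni: "n i > 1" using npos i by auto
  have x0: "x i 0 \<in> Mor L" using edge[OF i] ni by auto
  have ms: "m mod n i < n i" using ni by auto
  have "act (int (Suc m)) (x i 0) = act 1 (act (int m) (x i 0))"
    using act_add[OF x0, of 1 "int m"] by (simp add: add.commute)
  also have "\<dots> = x i ((m mod n i + 1) mod n i)" using Suc edge1[OF i ms] by simp
  also have "\<dots> = x i (Suc m mod n i)" by (simp add: mod_Suc_eq)
  finally have A: "act (int (Suc m)) (x i 0) = x i (Suc m mod n i)" .
  have "res (int (Suc m)) (x i 0) = res 1 (act (int m) (x i 0)) + res (int m) (x i 0)"
    using res_add[OF x0, of 1 "int m"] by (simp add: add.commute)
  also have "\<dots> = (if m mod n i < n i - 1 then 0 else 1) + int (m div n i)"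
    using Suc edge1[OF i ms] by simp
  also have "\<dots> = int (Suc m div n i)"
    using ms by (auto simp: div_Suc mod_Suc)
  finally show ?case using A by simp
qed


definition N :: "(nat \<Rightarrow> nat) \<Rightarrow> nat" where "N m = (\<Prod>i<k. n i ^ m i)"

lemma N_add: "N (\<lambda>j. a j + b j) = N a * N b"
  by (simp add: N_def power_add prod.distrib)

lemma N_pos: "N m > 0"
  unfolding N_def using npos by (auto intro!: prod_pos)

lemma N_zero: "N (\<lambda>_. 0) = 1" by (simp add: N_def)

lemma N_unit: assumes "i < k" shows "N (unitvec i) = n i"
proof -
  have "(\<Prod>i'<k. n i' ^ unitvec i i') = (\<Prod>i'<k. if i' = i then n i' else 1)"
    by (rule prod.cong) (auto simp: unitvec_def)
  then show ?thesis using assms by (simp add: N_def)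
qed

definition Pz :: "'a \<Rightarrow> (nat \<Rightarrow> nat) \<Rightarrow> bool" where
  "Pz z m \<longleftrightarrow> z \<in> Mor L \<and> deg L z = m \<and> (\<forall>j::nat. res (int j) z = int (j div N m))
     \<and> (\<forall>j::nat. act (int (N m * j)) z = z)"

lemma Pz_cmp:
  assumes a: "Pz a ma" and b: "Pz b mb"
  shows "Pz (cmp L a b) (\<lambda>j. ma j + mb j)"
proof -
  have aM: "a \<in> Mor L" and bM: "b \<in> Mor L" using a b unfolding Pz_def by auto
  have d: "deg L (cmp L a b) = (\<lambda>j. ma j + mb j)" using cmp_deg[OF aM bM] a b unfolding Pz_def by auto
  have r: "res (int j) (cmp L a b) = int (j div N (\<lambda>j. ma j + mb j))" for j
  proof -
    have "res (int j) (cmp L a b) = res (res (int j) a) b" using res_cmp[OF aM bM] .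
    also have "\<dots> = res (int (j div N ma)) b" using a unfolding Pz_def by auto
    also have "\<dots> = int (j div N ma div N mb)" using b unfolding Pz_def by auto
    finally show ?thesis by (simp add: N_add div_mult2_eq)
  qed
  have t: "act (int (N (\<lambda>j. ma j + mb j) * j)) (cmp L a b) = cmp L a b" for j
  proof -
    have e: "int (N (\<lambda>j. ma j + mb j) * j) = int (N ma * (N mb * j))" by (simp add: N_add mult.assoc)
    have "act (int (N ma * (N mb * j))) (cmp L a b) =
       cmp L (act (int (N ma * (N mb * j))) a) (act (res (int (N ma * (N mb * j))) a) b)"
      using act_cmp[OF aM bM] .
    also have "\<dots> = cmp L a (act (int (N mb * j)) b)"
    proof -
      have 1: "act (int (N ma * (N mb * j))) a = a" using a unfolding Pz_def by blast
      have "res (int (N ma * (N mb * j))) a = int (N ma * (N mb * j) div N ma)" using a unfolding Pz_def by blast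
      also have "\<dots> = int (N mb * j)" using N_pos[of ma] by simp
      finally show ?thesis using 1 by simp
    qed
    also have "\<dots> = cmp L a b" using b unfolding Pz_def by auto
    finally have "act (int (N ma * (N mb * j))) (cmp L a b) = cmp L a b" .
    then show ?thesis by (simp only: e)
  qed
  show ?thesis unfolding Pz_def using cmp_Mor[OF aM bM] d r t by auto
qed

lemma Pz_v: "Pz v (\<lambda>_. 0)"
  unfolding Pz_def using v_Mor deg_v res_v act_v N_zero by auto

lemma Pz_edge: assumes i: "i < k" shows "Pz (x i 0) (unitvec i)"
proof -
  have ni: "n i > 1" using npos i by auto
  have "act (int (n i * j)) (x i 0) = x i 0" for j
    using edge_act[OF i, of "n i * j"] by simp
  then show ?thesis unfolding Pz_def N_unit[OF i] using edge[OF i, of 0] ni edge_act[OF i]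
    by auto
qed

definition trans_Z :: "'a \<Rightarrow> (nat \<Rightarrow> nat) \<Rightarrow> bool" where
  "trans_Z z m \<longleftrightarrow> (\<forall>\<gamma>\<in>Mor L. deg L \<gamma> = m \<longrightarrow> (\<exists>J::nat. \<gamma> = act (int J) z))"

lemma Nk_unit: "i < k \<Longrightarrow> unitvec i \<in> Nk k" by (auto simp: Nk_def unitvec_def)

lemma ex_Z_aux: "m \<in> Nk k \<Longrightarrow> sum m {..<k} = s \<Longrightarrow> \<exists>z. Pz z m \<and> trans_Z z m"
proof (induction s arbitrary: m)
  case 0
  have m0: "m = (\<lambda>_. 0)"
  proof
    fix j show "m j = 0" using 0 unfolding Nk_def
      by (cases "j < k") (auto simp: sum_eq_0_iff)
  qed
  have "trans_Z v m" unfolding trans_Z_def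
  proof (intro ballI impI)
    fix \<gamma> assume "\<gamma> \<in> Mor L" "deg L \<gamma> = m"
    then have "\<gamma> \<in> vertices L" using m0 unfolding vertices_def by auto
    then have "\<gamma> = act (int 0) v" using vert act_v by auto
    then show "\<exists>J::nat. \<gamma> = act (int J) v" by blast
  qed
  then show ?case using Pz_v m0 by auto
next
  case (Suc s)
  then obtain i where i: "i < k" "m i > 0"
    by (metis lessThan_iff not_gr_zero sum.neutral zero_neq_one add_is_0 nat.simps(3))
  define m' where "m' = m(i := m i - 1)"
  have mm: "m = (\<lambda>j. unitvec i j + m' j)" using i unfolding m'_def unitvec_def by auto
  have m'N: "m' \<in> Nk k" using Suc.prems i unfolding Nk_def m'_def by auto
  have "sum m {..<k} = sum m' {..<k} + 1"
  proof -
    have "sum m {..<k} = sum (\<lambda>j. unitvec i j + m' j) {..<k}" using mm by metis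
    also have "\<dots> = sum (unitvec i) {..<k} + sum m' {..<k}" by (simp add: sum.distrib)
    also have "sum (unitvec i) {..<k} = 1" using i unfolding unitvec_def by simp
    finally show ?thesis by simp
  qed
  then have "sum m' {..<k} = s" using Suc.prems by simp
  then obtain z' where z': "Pz z' m'" "trans_Z z' m'" using Suc.IH m'N by blast
  define z where "z = cmp L (x i 0) z'"
  have Pzz: "Pz z m" unfolding z_def mm by (rule Pz_cmp[OF Pz_edge[OF i(1)] z'(1)])
  have ni: "n i > 1" using npos i by auto
  have x0: "x i 0 \<in> Mor L" using edge[OF i(1)] ni by auto
  have z'M: "z' \<in> Mor L" using z' unfolding Pz_def by auto
  have "trans_Z z m" unfolding trans_Z_def
  proof (intro ballI impI)
    fix \<gamma> assume g: "\<gamma> \<in> Mor L" "deg L \<gamma> = m"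
    obtain e \<gamma>' where e: "e \<in> Mor L" "\<gamma>' \<in> Mor L" "deg L e = unitvec i" "deg L \<gamma>' = m'"
      "\<gamma> = cmp L e \<gamma>'"
      using UF_ex[OF g(1) Nk_unit[OF i(1)] m'N] g mm by metis
    obtain t where t: "t < n i" "e = x i t" using edge_all[OF i(1) e(1) e(3)] by auto
    obtain J where J: "\<gamma>' = act (int J) z'" using z'(2) e unfolding trans_Z_def by auto
    define K where "K = t + n i * J"
    have "act (int K) z = cmp L (act (int K) (x i 0)) (act (res (int K) (x i 0)) z')"
      unfolding z_def by (rule act_cmp[OF x0 z'M])
    also have "\<dots> = cmp L (x i (K mod n i)) (act (int (K div n i)) z')"
      using edge_act[OF i(1)] by simp
    also have "\<dots> = \<gamma>" using t J e(5) unfolding K_def by simp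
    finally show "\<exists>J::nat. \<gamma> = act (int J) z" by metis
  qed
  then show ?case using Pzz by blast
qed

definition Z :: "(nat \<Rightarrow> nat) \<Rightarrow> 'a" where "Z m = (SOME z. Pz z m \<and> trans_Z z m)"

lemma Z_prop: "m \<in> Nk k \<Longrightarrow> Pz (Z m) m \<and> trans_Z (Z m) m"
  unfolding Z_def using ex_Z_aux by (metis (no_types, lifting) someI_ex)

lemma Z_Mor: "m \<in> Nk k \<Longrightarrow> Z m \<in> Mor L" using Z_prop unfolding Pz_def by auto
lemma Z_deg: "m \<in> Nk k \<Longrightarrow> deg L (Z m) = m" using Z_prop unfolding Pz_def by auto
lemma Z_res: "m \<in> Nk k \<Longrightarrow> res (int j) (Z m) = int (j div N m)" using Z_prop unfolding Pz_def by auto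
lemma Z_act: "m \<in> Nk k \<Longrightarrow> act (int (N m * j)) (Z m) = Z m" using Z_prop unfolding Pz_def by auto

lemma divlem:
  assumes N0: "(NN::nat) > 0" and h: "\<And>j::nat. (j + d) div NN = j div NN + d div NN"
  shows "d mod NN = 0"
proof (rule ccontr)
  assume c: "d mod NN \<noteq> 0"
  define j where "j = NN - d mod NN"
  have "d mod NN < NN" using N0 by auto
  then have j1: "j < NN" "j > 0" using c unfolding j_def by auto
  have e: "d = NN * (d div NN) + d mod NN" by simp
  have "j + d = NN * (d div NN + 1)" unfolding j_def distrib_left mult_1_right
    using e \<open>d mod NN < NN\<close> by linarith
  then have "(j + d) div NN = d div NN + 1" using N0 by simp
  moreover have "j div NN = 0" using j1 by simp
  ultimately show False using h[of j] by simp
qed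

lemma act_fix:
  assumes m: "m \<in> Nk k" and f: "act (int d) (Z m) = Z m"
  shows "d mod N m = 0"
proof (rule divlem[OF N_pos])
  fix j :: nat
  have "res (int j + int d) (Z m) = res (int j) (act (int d) (Z m)) + res (int d) (Z m)"
    using res_add Z_Mor[OF m] by blast
  then have "int ((j + d) div N m) = int (j div N m) + int (d div N m)"
    using f Z_res[OF m] by (metis of_nat_add)
  then show "(j + d) div N m = j div N m + d div N m" by linarith
qed

lemma Z_unique:
  assumes m: "m \<in> Nk k" and w: "Pz w m"
  shows "w = Z m"
proof -
  obtain K where K: "w = act (int K) (Z m)"
    using Z_prop[OF m] w unfolding trans_Z_def Pz_def by auto
  have "K mod N m = 0"
  proof (rule divlem[OF N_pos])
    fix j :: nat
    have "res (int j + int K) (Z m) = res (int j) (act (int K) (Z m)) + res (int K) (Z m)"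
      using res_add Z_Mor[OF m] by blast
    then have "int ((j + K) div N m) = int (j div N m) + int (K div N m)"
      using K w Z_res[OF m] unfolding Pz_def by (metis of_nat_add)
    then show "(j + K) div N m = j div N m + K div N m" by linarith
  qed
  then have "K = N m * (K div N m)" using div_mult_mod_eq[of K "N m"] by (simp add: mult.commute)
  then show ?thesis using K Z_act[OF m] by metis
qed

lemma Nk_add: "a \<in> Nk k \<Longrightarrow> b \<in> Nk k \<Longrightarrow> (\<lambda>j. a j + b j) \<in> Nk k" by (auto simp: Nk_def)
lemma Nk_diff: "a \<in> Nk k \<Longrightarrow> (\<lambda>j. a j - b j) \<in> Nk k" by (auto simp: Nk_def)
lemma Nk_zero: "(\<lambda>_. 0) \<in> Nk k" by (auto simp: Nk_def)

lemma Z_cmp: "a \<in> Nk k \<Longrightarrow> b \<in> Nk k \<Longrightarrow> cmp L (Z a) (Z b) = Z (\<lambda>j. a j + b j)"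
proof -
  assume a: "a \<in> Nk k" and b: "b \<in> Nk k"
  have "Pz (cmp L (Z a) (Z b)) (\<lambda>j. a j + b j)"
    using Pz_cmp Z_prop[OF a] Z_prop[OF b] by blast
  then show ?thesis using Z_unique[OF Nk_add[OF a b]] by blast
qed

lemma Z_zero: "Z (\<lambda>_. 0) = v" using Z_unique[OF Nk_zero Pz_v] by simp

lemma act_mod: "m \<in> Nk k \<Longrightarrow> act (int (J + N m * s)) (Z m) = act (int J) (Z m)"
  using act_add[OF Z_Mor, of m "int J" "int (N m * s)"] Z_act by simp

lemma Z_trans: "m \<in> Nk k \<Longrightarrow> \<gamma> \<in> Mor L \<Longrightarrow> deg L \<gamma> = m \<Longrightarrow> \<exists>J. J < N m \<and> \<gamma> = act (int J) (Z m)"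
proof -
  assume m: "m \<in> Nk k" and g: "\<gamma> \<in> Mor L" "deg L \<gamma> = m"
  obtain J where J: "\<gamma> = act (int J) (Z m)" using Z_prop[OF m] g unfolding trans_Z_def by auto
  have "act (int J) (Z m) = act (int (J mod N m + N m * (J div N m))) (Z m)"
    by (simp only: mod_mult_div_eq)
  also have "\<dots> = act (int (J mod N m)) (Z m)" by (rule act_mod[OF m])
  finally have "act (int J) (Z m) = act (int (J mod N m)) (Z m)" .
  then show ?thesis using J N_pos[of m] mod_less_divisor by blast
qed


lemma path_props:
  assumes y: "y \<in> infpaths k L" and o: "in_Omega k p q"
  shows "y p q \<in> Mor L \<and> deg L (y p q) = (\<lambda>j. q j - p j)"
  using y o unfolding infpaths_def by auto

lemma path_split:
  assumes y: "y \<in> infpaths k L" and o: "in_Omega k p q" "in_Omega k q r"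
  shows "y p r = cmp L (y p q) (y q r)"
  using y o unfolding infpaths_def by auto

lemma in_Omega_trans: "in_Omega k p q \<Longrightarrow> in_Omega k q r \<Longrightarrow> in_Omega k p r"
  unfolding in_Omega_def by auto

lemma split_eq:
  assumes y: "y \<in> infpaths k L" and y': "y' \<in> infpaths k L"
    and o: "in_Omega k p q" "in_Omega k q r" and e: "y p r = y' p r"
  shows "y p q = y' p q \<and> y q r = y' q r"
proof -
  have "cmp L (y p q) (y q r) = cmp L (y' p q) (y' q r)"
    using path_split[OF y o] path_split[OF y' o] e by simp
  moreover have "y p q \<in> Mor L" "deg L (y p q) = (\<lambda>j. q j - p j)" using path_props[OF y o(1)] by auto
  moreover have "y q r \<in> Mor L" "deg L (y q r) = (\<lambda>j. r j - q j)" using path_props[OF y o(2)] by auto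
  moreover have "y' p q \<in> Mor L" "deg L (y' p q) = (\<lambda>j. q j - p j)" using path_props[OF y' o(1)] by auto
  moreover have "y' q r \<in> Mor L" "deg L (y' q r) = (\<lambda>j. r j - q j)" using path_props[OF y' o(2)] by auto
  ultimately show ?thesis using UF_un[of "y p q" "y q r" "y' p q" "y' q r"] by simp
qed

lemma zero_Omega: "q \<in> Nk k \<Longrightarrow> in_Omega k (\<lambda>_. 0) q"
  unfolding in_Omega_def by (auto simp: Nk_def le_fun_def)

lemma path_eq:
  assumes y: "y \<in> infpaths k L" and y': "y' \<in> infpaths k L"
    and h: "\<And>q. q \<in> Nk k \<Longrightarrow> \<exists>Q. in_Omega k q Q \<and> y (\<lambda>_. 0) Q = y' (\<lambda>_. 0) Q"
  shows "y = y'"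
proof (intro ext)
  fix p q
  show "y p q = y' p q"
  proof (cases "in_Omega k p q")
    case True
    then have qN: "q \<in> Nk k" "p \<in> Nk k" unfolding in_Omega_def by auto
    obtain Q where Q: "in_Omega k q Q" "y (\<lambda>_. 0) Q = y' (\<lambda>_. 0) Q" using h[OF qN(1)] by blast
    have "y (\<lambda>_. 0) q = y' (\<lambda>_. 0) q"
      using split_eq[where p="\<lambda>_. 0" and q=q and r=Q, OF y y' zero_Omega[OF qN(1)] Q(1) Q(2)] by blast
    then show ?thesis using split_eq[where p="\<lambda>_. 0" and q=p and r=q, OF y y' zero_Omega[OF qN(2)] True] by blast
  next
    case False
    then show ?thesis using y y' unfolding infpaths_def by auto
  qed
qed

lemma Omega_shift: "in_Omega k p q \<Longrightarrow> a \<in> Nk k \<Longrightarrow> in_Omega k (\<lambda>j. a j + p j) (\<lambda>j. a j + q j)"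
  unfolding in_Omega_def by (auto simp: Nk_def le_fun_def)

lemma Omega_add: "a \<in> Nk k \<Longrightarrow> q \<in> Nk k \<Longrightarrow> in_Omega k a (\<lambda>j. a j + q j)"
  unfolding in_Omega_def by (auto simp: Nk_def le_fun_def)

lemma prepend_eq:
  assumes mu: "\<mu> \<in> Mor L" and y: "y \<in> infpaths k L" and y0: "y (\<lambda>_. 0) (deg L \<mu>) = \<mu>"
    and ys: "\<And>p q. in_Omega k p q \<Longrightarrow> y (\<lambda>j. deg L \<mu> j + p j) (\<lambda>j. deg L \<mu> j + q j) = xx p q"
  shows "prepend k L \<mu> xx = y"
  unfolding prepend_def
proof (rule the_equality)
  show "y \<in> infpaths k L \<and> y (\<lambda>_. 0) (deg L \<mu>) = \<mu> \<and>
    (\<forall>p q. in_Omega k p q \<longrightarrow> y (\<lambda>j. deg L \<mu> j + p j) (\<lambda>j. deg L \<mu> j + q j) = xx p q)"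
    using y y0 ys by blast
  fix y' assume a: "y' \<in> infpaths k L \<and> y' (\<lambda>_. 0) (deg L \<mu>) = \<mu> \<and>
    (\<forall>p q. in_Omega k p q \<longrightarrow> y' (\<lambda>j. deg L \<mu> j + p j) (\<lambda>j. deg L \<mu> j + q j) = xx p q)"
  have dN: "deg L \<mu> \<in> Nk k" using deg_Nk mu by auto
  show "y' = y"
  proof (rule path_eq)
    show "y' \<in> infpaths k L" "y \<in> infpaths k L" using a y by auto
    fix q assume q: "q \<in> Nk k"
    have o1: "in_Omega k (\<lambda>_. 0) (deg L \<mu>)" using zero_Omega[OF dN] .
    have o2: "in_Omega k (deg L \<mu>) (\<lambda>j. deg L \<mu> j + q j)" using Omega_add[OF dN q] .
    have z: "in_Omega k (\<lambda>_. 0) q" using zero_Omega[OF q] .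
    have "y' (\<lambda>_. 0) (\<lambda>j. deg L \<mu> j + q j) = cmp L \<mu> (xx (\<lambda>_. 0) q)"
      using path_split[OF _ o1 o2, of y'] a spec[OF spec[OF conjunct2[OF conjunct2[OF a]], of "\<lambda>_. 0"], of q] z
      by simp
    moreover have "y (\<lambda>_. 0) (\<lambda>j. deg L \<mu> j + q j) = cmp L \<mu> (xx (\<lambda>_. 0) q)"
      using path_split[OF y o1 o2] y0 ys[OF z] by simp
    ultimately show "\<exists>Q. in_Omega k q Q \<and> y' (\<lambda>_. 0) Q = y (\<lambda>_. 0) Q"
      using Omega_add[OF q dN] by (auto simp add: add.commute)
  qed
qed

definition W :: "nat \<Rightarrow> (nat \<Rightarrow> nat) \<Rightarrow> (nat \<Rightarrow> nat) \<Rightarrow> 'a" where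
  "W t = (\<lambda>p q. if in_Omega k p q then act (int (t div N p)) (Z (\<lambda>j. q j - p j)) else undefined)"

lemma N_le: "in_Omega k p q \<Longrightarrow> N q = N p * N (\<lambda>j. q j - p j)"
proof -
  assume "in_Omega k p q"
  then have "q = (\<lambda>j. p j + (q j - p j))" unfolding in_Omega_def le_fun_def by auto
  then show ?thesis using N_add by metis
qed

lemma W_path: "W t \<in> infpaths k L"
  unfolding infpaths_def mem_Collect_eq
proof (intro conjI allI impI)
  fix p q assume o: "in_Omega k p q"
  have qp: "(\<lambda>j. q j - p j) \<in> Nk k" using o Nk_diff unfolding in_Omega_def by auto
  have pN: "p \<in> Nk k" using o unfolding in_Omega_def by auto
  have Wm: "W t p q \<in> Mor L" using o act_Mor Z_Mor[OF qp] unfolding W_def by auto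
  have Wpp: "W t p p = v"
    using pN Z_zero act_v unfolding W_def in_Omega_def by auto
  show "W t p q \<in> Mor L" using Wm .
  show "deg L (W t p q) = (\<lambda>j. q j - p j)" using o act_deg Z_Mor[OF qp] Z_deg[OF qp] unfolding W_def by auto
  show "rng L (W t p q) = W t p p" using rng_Mor[OF Wm] Wpp by simp
  have Wqq: "W t q q = v"
    using o Z_zero act_v unfolding W_def in_Omega_def by auto
  show "src L (W t p q) = W t q q" using src_Mor[OF Wm] Wqq by simp
next
  fix p q m assume o1: "in_Omega k p q" and o2: "in_Omega k q m"
  have o3: "in_Omega k p m" using in_Omega_trans[OF o1 o2] .
  have d1: "(\<lambda>j. q j - p j) \<in> Nk k" and d2: "(\<lambda>j. m j - q j) \<in> Nk k"
    using o1 o2 Nk_diff unfolding in_Omega_def by auto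
  have dd: "(\<lambda>j. (q j - p j) + (m j - q j)) = (\<lambda>j. m j - p j)"
    using o1 o2 unfolding in_Omega_def le_fun_def by (auto intro!: ext)
  have r: "res (int (t div N p)) (Z (\<lambda>j. q j - p j)) = int (t div N q)"
    using Z_res[OF d1] N_le[OF o1] by (simp add: div_mult2_eq)
  have "act (int (t div N p)) (Z (\<lambda>j. m j - p j)) =
        act (int (t div N p)) (cmp L (Z (\<lambda>j. q j - p j)) (Z (\<lambda>j. m j - q j)))"
    using Z_cmp[OF d1 d2] dd by simp
  also have "\<dots> = cmp L (act (int (t div N p)) (Z (\<lambda>j. q j - p j))) (act (int (t div N q)) (Z (\<lambda>j. m j - q j)))"
    using act_cmp[OF Z_Mor[OF d1] Z_Mor[OF d2]] r by simp
  finally show "cmp L (W t p q) (W t q m) = W t p m" using o1 o2 o3 unfolding W_def by simp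
next
  fix p q assume "\<not> in_Omega k p q" then show "W t p q = undefined" unfolding W_def by simp
qed

lemma W_0: "q \<in> Nk k \<Longrightarrow> W t (\<lambda>_. 0) q = act (int t) (Z q)"
  unfolding W_def using zero_Omega N_zero by simp

lemma W_00: "W t (\<lambda>_. 0) (\<lambda>_. 0) = v"
  using W_0[OF Nk_zero] Z_zero act_v by simp

lemma act_inf_W:
  assumes "g + int t = int t'"
  shows "act_inf k act res g (W t) = W t'"
proof (intro ext)
  fix p q
  show "act_inf k act res g (W t) p q = W t' p q"
  proof (cases "in_Omega k p q")
    case True
    then have pN: "p \<in> Nk k" and qp: "(\<lambda>j. q j - p j) \<in> Nk k" using Nk_diff unfolding in_Omega_def by auto
    have "res (g + int t) (Z p) = res g (act (int t) (Z p)) + res (int t) (Z p)"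
      using res_add Z_Mor[OF pN] by blast
    then have r: "res g (act (int t) (Z p)) = int (t' div N p) - int (t div N p)"
      using assms Z_res[OF pN] by simp
    have "act_inf k act res g (W t) p q = act (res g (act (int t) (Z p))) (act (int (t div N p)) (Z (\<lambda>j. q j - p j)))"
      unfolding act_inf_def using True W_0[OF pN] by (simp add: W_def)
    also have "\<dots> = act (int (t' div N p)) (Z (\<lambda>j. q j - p j))"
      using act_add[OF Z_Mor[OF qp], symmetric] r by simp
    finally show ?thesis using True unfolding W_def by simp
  next
    case False then show ?thesis unfolding act_inf_def W_def by simp
  qed
qed

lemma prepend_W:
  assumes a: "a \<in> Nk k" and K: "K < N a" and mu: "\<mu> = act (int K) (Z a)"
  shows "prepend k L \<mu> (W J) = W (K + N a * J)"
proof -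
  have muM: "\<mu> \<in> Mor L" using mu act_Mor Z_Mor[OF a] by auto
  have dm: "deg L \<mu> = a" using mu act_deg Z_Mor[OF a] Z_deg[OF a] by auto
  show ?thesis
  proof (rule prepend_eq[OF muM W_path])
    show "W (K + N a * J) (\<lambda>_. 0) (deg L \<mu>) = \<mu>"
      using dm W_0[OF a] act_mod[OF a] mu by simp
    fix p q assume o: "in_Omega k p q"
    have o': "in_Omega k (\<lambda>j. a j + p j) (\<lambda>j. a j + q j)" using Omega_shift[OF o a] .
    have e: "(K + N a * J) div N (\<lambda>j. a j + p j) = J div N p"
      using K N_add[of a p] by (simp add: div_mult2_eq)
    show "W (K + N a * J) (\<lambda>j. deg L \<mu> j + p j) (\<lambda>j. deg L \<mu> j + q j) = W J p q"
      using o o' e dm unfolding W_def by simp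
  qed
qed

lemma act_eq_dvd:
  assumes m: "m \<in> Nk k" and e: "act (int t) (Z m) = act (int t') (Z m)"
  shows "int (N m) dvd (int t - int t')"
proof -
  have gen: "int (N m) dvd (int t - int t')" if e: "act (int t) (Z m) = act (int t') (Z m)" and le: "t' \<le> t" for t t'
  proof -
    have "act (- int t') (act (int t) (Z m)) = act (- int t') (act (int t') (Z m))" using e by simp
    then have "act (int (t - t')) (Z m) = Z m"
      using act_add[OF Z_Mor[OF m], symmetric] act0[OF Z_Mor[OF m]] le by (simp add: of_nat_diff)
    then have "(t - t') mod N m = 0" using act_fix[OF m] by blast
    then have "N m dvd (t - t')" by auto
    then show ?thesis using le by (metis int_dvd_int_iff of_nat_diff)
  qed
  show ?thesis
  proof (cases "t' \<le> t")
    case True then show ?thesis using gen e by blast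
  next
    case False
    then have "int (N m) dvd (int t' - int t)" using gen e by simp
    then show ?thesis by (metis dvd_minus_iff minus_diff_eq)
  qed
qed


lemma path_dec:
  assumes y: "y \<in> infpaths k L" and o: "in_Omega k p q" "in_Omega k q r"
    and al: "\<alpha> \<in> Mor L" "deg L \<alpha> = (\<lambda>j. q j - p j)" and be: "\<beta> \<in> Mor L" "deg L \<beta> = (\<lambda>j. r j - q j)"
    and e: "y p r = cmp L \<alpha> \<beta>"
  shows "y p q = \<alpha> \<and> y q r = \<beta>"
proof -
  have "cmp L (y p q) (y q r) = cmp L \<alpha> \<beta>" using path_split[OF y o] e by simp
  moreover have "y p q \<in> Mor L" "deg L (y p q) = (\<lambda>j. q j - p j)" using path_props[OF y o(1)] by auto
  moreover have "y q r \<in> Mor L" "deg L (y q r) = (\<lambda>j. r j - q j)" using path_props[OF y o(2)] by auto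
  ultimately show ?thesis using UF_un[of "y p q" "y q r" \<alpha> \<beta>] al be by simp
qed

lemma act_inf_0: "xx \<in> infpaths k L \<Longrightarrow> act_inf k act res 0 xx = xx"
proof (intro ext)
  fix p q assume xx: "xx \<in> infpaths k L"
  show "act_inf k act res 0 xx p q = xx p q"
  proof (cases "in_Omega k p q")
    case True
    then have pN: "p \<in> Nk k" unfolding in_Omega_def by auto
    have "xx (\<lambda>_. 0) p \<in> Mor L" "xx p q \<in> Mor L"
      using path_props[OF xx zero_Omega[OF pN]] path_props[OF xx True] by auto
    then show ?thesis using True res0 act0 unfolding act_inf_def by simp
  next
    case False then show ?thesis using xx unfolding act_inf_def infpaths_def by auto
  qed
qed

lemma C_dir:
  assumes a: "a \<in> Nk k" and b: "b \<in> Nk k" and Neq: "N a = N b"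
    and xx: "xx \<in> infpaths k L" and y: "y \<in> infpaths k L"
    and y0: "y (\<lambda>_. 0) a = Z a"
    and ys: "\<And>p q. in_Omega k p q \<Longrightarrow> y (\<lambda>j. a j + p j) (\<lambda>j. a j + q j) = xx p q"
  shows "y (\<lambda>_. 0) b = Z b \<and> (\<forall>p q. in_Omega k p q \<longrightarrow> y (\<lambda>j. b j + p j) (\<lambda>j. b j + q j) = xx p q)"
proof -
  have key: "y (\<lambda>_. 0) b = Z b \<and> y b (\<lambda>j. a j + (b j + c j)) = xx (\<lambda>_. 0) (\<lambda>j. a j + c j)"
    if c: "c \<in> Nk k" for c
  proof -
    define S where "S = (\<lambda>j. a j + (b j + c j))"
    have bc: "(\<lambda>j. b j + c j) \<in> Nk k" and ac: "(\<lambda>j. a j + c j) \<in> Nk k" and SN: "S \<in> Nk k"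
      using a b c unfolding Nk_def S_def by auto
    have o1: "in_Omega k (\<lambda>_. 0) a" using zero_Omega[OF a] .
    have o2: "in_Omega k a S" using a SN unfolding in_Omega_def S_def le_fun_def by auto
    have o3: "in_Omega k (\<lambda>_. 0) (\<lambda>j. b j + c j)" using zero_Omega[OF bc] .
    have o4: "in_Omega k (\<lambda>j. b j + c j) S" using bc SN unfolding in_Omega_def S_def le_fun_def by auto
    have o5: "in_Omega k (\<lambda>_. 0) (\<lambda>j. a j + c j)" using zero_Omega[OF ac] .
    have o6: "in_Omega k (\<lambda>j. a j + c j) S" using ac SN unfolding in_Omega_def S_def le_fun_def by auto
    have o7: "in_Omega k (\<lambda>_. 0) b" using zero_Omega[OF b] .
    have o8: "in_Omega k b S" using b SN unfolding in_Omega_def S_def le_fun_def by auto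
    have F: "y (\<lambda>_. 0) S = cmp L (Z a) (xx (\<lambda>_. 0) (\<lambda>j. b j + c j))"
    proof -
      have "y a S = xx (\<lambda>_. 0) (\<lambda>j. b j + c j)" using ys[OF o3] unfolding S_def by simp
      then show ?thesis using path_split[OF y o1 o2] y0 by simp
    qed
    have xS: "xx (\<lambda>_. 0) S \<in> Mor L" "deg L (xx (\<lambda>_. 0) S) = S" using path_props[OF xx zero_Omega[OF SN]] by auto
    obtain J where J: "xx (\<lambda>_. 0) S = act (int J) (Z S)" using Z_trans[OF SN xS] by blast
    have Z1: "Z S = cmp L (Z (\<lambda>j. b j + c j)) (Z a)"
      using Z_cmp[OF bc a] unfolding S_def by (simp add: ac_simps)
    have Z2: "Z S = cmp L (Z (\<lambda>j. a j + c j)) (Z b)"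
      using Z_cmp[OF ac b] unfolding S_def by (simp add: ac_simps)
    have Z3: "Z S = cmp L (Z a) (Z (\<lambda>j. b j + c j))"
      using Z_cmp[OF a bc] unfolding S_def by (simp add: ac_simps)
    have Z4: "Z S = cmp L (Z b) (Z (\<lambda>j. a j + c j))"
      using Z_cmp[OF b ac] unfolding S_def by (simp add: ac_simps)
    have xbc: "xx (\<lambda>_. 0) (\<lambda>j. b j + c j) = act (int J) (Z (\<lambda>j. b j + c j))"
    proof -
      have "xx (\<lambda>_. 0) S = cmp L (act (int J) (Z (\<lambda>j. b j + c j))) (act (res (int J) (Z (\<lambda>j. b j + c j))) (Z a))"
        using J Z1 act_cmp[OF Z_Mor[OF bc] Z_Mor[OF a]] by simp
      moreover have "act (int J) (Z (\<lambda>j. b j + c j)) \<in> Mor L" "act (res (int J) (Z (\<lambda>j. b j + c j))) (Z a) \<in> Mor L"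
        using act_Mor Z_Mor bc a by auto
      moreover have "deg L (act (int J) (Z (\<lambda>j. b j + c j))) = (\<lambda>j. (b j + c j) - 0)"
        using act_deg Z_Mor[OF bc] Z_deg[OF bc] by simp
      moreover have "deg L (act (res (int J) (Z (\<lambda>j. b j + c j))) (Z a)) = (\<lambda>j. S j - (b j + c j))"
        using act_deg Z_Mor[OF a] Z_deg[OF a] unfolding S_def by simp
      ultimately show ?thesis using path_dec[OF xx o3 o4] by blast
    qed
    have xac: "xx (\<lambda>_. 0) (\<lambda>j. a j + c j) = act (int J) (Z (\<lambda>j. a j + c j))"
    proof -
      have "xx (\<lambda>_. 0) S = cmp L (act (int J) (Z (\<lambda>j. a j + c j))) (act (res (int J) (Z (\<lambda>j. a j + c j))) (Z b))"
        using J Z2 act_cmp[OF Z_Mor[OF ac] Z_Mor[OF b]] by simp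
      moreover have "act (int J) (Z (\<lambda>j. a j + c j)) \<in> Mor L" "act (res (int J) (Z (\<lambda>j. a j + c j))) (Z b) \<in> Mor L"
        using act_Mor Z_Mor ac b by auto
      moreover have "deg L (act (int J) (Z (\<lambda>j. a j + c j))) = (\<lambda>j. (a j + c j) - 0)"
        using act_deg Z_Mor[OF ac] Z_deg[OF ac] by simp
      moreover have "deg L (act (res (int J) (Z (\<lambda>j. a j + c j))) (Z b)) = (\<lambda>j. S j - (a j + c j))"
        using act_deg Z_Mor[OF b] Z_deg[OF b] unfolding S_def by simp
      ultimately show ?thesis using path_dec[OF xx o5 o6] by blast
    qed
    have shiftA: "cmp L (Z a) (act (int J) (Z (\<lambda>j. b j + c j))) = act (int (N a * J)) (Z S)"
    proof -
      have r: "res (int (N a * J)) (Z a) = int J" using Z_res[OF a, of "N a * J"] N_pos[of a] by simp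
      have "act (int (N a * J)) (Z S) = cmp L (act (int (N a * J)) (Z a)) (act (res (int (N a * J)) (Z a)) (Z (\<lambda>j. b j + c j)))"
        using Z3 act_cmp[OF Z_Mor[OF a] Z_Mor[OF bc]] by simp
      then show ?thesis using r Z_act[OF a] by simp
    qed
    have shiftB: "cmp L (Z b) (act (int J) (Z (\<lambda>j. a j + c j))) = act (int (N b * J)) (Z S)"
    proof -
      have r: "res (int (N b * J)) (Z b) = int J" using Z_res[OF b, of "N b * J"] N_pos[of b] by simp
      have "act (int (N b * J)) (Z S) = cmp L (act (int (N b * J)) (Z b)) (act (res (int (N b * J)) (Z b)) (Z (\<lambda>j. a j + c j)))"
        using Z4 act_cmp[OF Z_Mor[OF b] Z_Mor[OF ac]] by simp
      then show ?thesis using r Z_act[OF b] by simp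
    qed
    have "y (\<lambda>_. 0) S = cmp L (Z b) (xx (\<lambda>_. 0) (\<lambda>j. a j + c j))"
      using F xbc xac shiftA shiftB Neq by simp
    moreover have "Z b \<in> Mor L" "deg L (Z b) = (\<lambda>j. b j - 0)" using Z_Mor[OF b] Z_deg[OF b] by auto
    moreover have "xx (\<lambda>_. 0) (\<lambda>j. a j + c j) \<in> Mor L" "deg L (xx (\<lambda>_. 0) (\<lambda>j. a j + c j)) = (\<lambda>j. S j - b j)"
      using path_props[OF xx o5] unfolding S_def by auto
    ultimately have "y (\<lambda>_. 0) b = Z b \<and> y b S = xx (\<lambda>_. 0) (\<lambda>j. a j + c j)"
      using path_dec[OF y o7 o8] by blast
    then show ?thesis unfolding S_def .
  qed
  show ?thesis
  proof (intro conjI allI impI)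
    show "y (\<lambda>_. 0) b = Z b" using key[OF Nk_zero] by simp
    fix p q assume o: "in_Omega k p q"
    then have pN: "p \<in> Nk k" and qN: "q \<in> Nk k" and pq: "\<forall>j. p j \<le> q j" unfolding in_Omega_def le_fun_def by auto
    define S where "S = (\<lambda>j. a j + (b j + q j))"
    have k1: "y b S = xx (\<lambda>_. 0) (\<lambda>j. a j + q j)" using key[OF qN] unfolding S_def by simp
    have SN: "S \<in> Nk k" and aqN: "(\<lambda>j. a j + q j) \<in> Nk k" using a b qN unfolding S_def Nk_def by auto
    have o1: "in_Omega k b (\<lambda>j. b j + p j)" and o2: "in_Omega k (\<lambda>j. b j + p j) S"
      and o3: "in_Omega k (\<lambda>j. b j + p j) (\<lambda>j. b j + q j)" and o4: "in_Omega k (\<lambda>j. b j + q j) S"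
      using b pN qN SN pq unfolding in_Omega_def S_def le_fun_def Nk_def by (auto intro: trans_le_add2)
    have p1: "in_Omega k (\<lambda>_. 0) p" and p2: "in_Omega k p (\<lambda>j. a j + q j)" and p3: "in_Omega k q (\<lambda>j. a j + q j)"
      using pN aqN qN pq unfolding in_Omega_def le_fun_def Nk_def by (auto intro: trans_le_add2)
    have "y (\<lambda>j. b j + p j) S = xx p (\<lambda>j. a j + q j)"
    proof -
      have "y b S = cmp L (xx (\<lambda>_. 0) p) (xx p (\<lambda>j. a j + q j))" using k1 path_split[OF xx p1 p2] by simp
      moreover have "xx (\<lambda>_. 0) p \<in> Mor L" "deg L (xx (\<lambda>_. 0) p) = (\<lambda>j. (b j + p j) - b j)"
        using path_props[OF xx p1] by auto
      moreover have "xx p (\<lambda>j. a j + q j) \<in> Mor L" "deg L (xx p (\<lambda>j. a j + q j)) = (\<lambda>j. S j - (b j + p j))"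
        using path_props[OF xx p2] pq unfolding S_def by auto
      ultimately show ?thesis using path_dec[OF y o1 o2] by blast
    qed
    moreover have "xx p (\<lambda>j. a j + q j) = cmp L (xx p q) (xx q (\<lambda>j. a j + q j))"
      using path_split[OF xx o p3] .
    moreover have "xx p q \<in> Mor L" "deg L (xx p q) = (\<lambda>j. (b j + q j) - (b j + p j))"
      using path_props[OF xx o] by auto
    moreover have "xx q (\<lambda>j. a j + q j) \<in> Mor L" "deg L (xx q (\<lambda>j. a j + q j)) = (\<lambda>j. S j - (b j + q j))"
      using path_props[OF xx p3] unfolding S_def by auto
    ultimately show "y (\<lambda>j. b j + p j) (\<lambda>j. b j + q j) = xx p q"
      using path_dec[OF y o3 o4] by metis
  qed
qed


lemma prod_powi: "(\<Prod>i<k. real (n i) powi (int (a i) - int (b i))) = real (N a) / real (N b)"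
proof -
  have "(\<Prod>i<k. real (n i) powi (int (a i) - int (b i))) = (\<Prod>i<k. real (n i) ^ a i / real (n i) ^ b i)"
  proof (rule prod.cong)
    fix i assume "i \<in> {..<k}"
    then have "real (n i) \<noteq> 0" using npos by auto
    then show "real (n i) powi (int (a i) - int (b i)) = real (n i) ^ a i / real (n i) ^ b i"
      by (simp add: power_int_diff)
  qed simp
  also have "\<dots> = (\<Prod>i<k. real (n i) ^ a i) / (\<Prod>i<k. real (n i) ^ b i)"
    by (rule prod_dividef)
  also have "\<dots> = real (N a) / real (N b)" unfolding N_def by simp
  finally show ?thesis .
qed

lemma dvd_eq_int: "(xx::int) > 0 \<Longrightarrow> yy > 0 \<Longrightarrow> xx * yy dvd (xx - yy) \<Longrightarrow> xx = yy"
proof (rule ccontr)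
  assume a: "xx > 0" "yy > 0" "xx * yy dvd (xx - yy)" "xx \<noteq> yy"
  then have "\<bar>xx * yy\<bar> \<le> \<bar>xx - yy\<bar>" using dvd_imp_le_int[of "xx - yy" "xx * yy"] by simp
  moreover have "xx * yy \<ge> xx" "xx * yy \<ge> yy" using a by (simp_all add: mult_le_cancel_left1 mult_le_cancel_right1)
  ultimately show False using a by arith
qed

lemma B:
  assumes cyc: "cycline k L act res \<mu> g \<nu>"
  shows "N (deg L \<mu>) = N (deg L \<nu>)"
proof -
  have muM: "\<mu> \<in> Mor L" and nuM: "\<nu> \<in> Mor L" using cyc unfolding cycline_def by auto
  define a where "a = deg L \<mu>"
  define b where "b = deg L \<nu>"
  have a: "a \<in> Nk k" and b: "b \<in> Nk k" using deg_Nk muM nuM unfolding a_def b_def by auto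
  obtain K where K: "K < N a" "\<mu> = act (int K) (Z a)" using Z_trans[OF a muM a_def[symmetric]] by blast
  obtain K' where K': "K' < N b" "\<nu> = act (int K') (Z b)" using Z_trans[OF b nuM b_def[symmetric]] by blast
  have ab: "(\<lambda>j. a j + b j) \<in> Nk k" using Nk_add[OF a b] .
  have key: "int (N a * N b) dvd (int (K + N a * nat (g + int J)) - int (K' + N b * J))"
    if J: "g + int J \<ge> 0" for J
  proof -
    have xin: "W J \<in> infpaths_from k L (src L \<nu>)"
      unfolding infpaths_from_def using W_path W_00 src_Mor[OF nuM] by simp
    have P: "prepend k L \<mu> (act_inf k act res g (W J)) = prepend k L \<nu> (W J)"
      using cyc xin unfolding cycline_def by blast
    have A: "act_inf k act res g (W J) = W (nat (g + int J))"
      by (rule act_inf_W) (use J in simp)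
    have "W (K + N a * nat (g + int J)) = prepend k L \<mu> (W (nat (g + int J)))"
      by (rule prepend_W[OF a K(1) K(2), symmetric])
    also have "\<dots> = prepend k L \<mu> (act_inf k act res g (W J))" by (simp only: A)
    also have "\<dots> = prepend k L \<nu> (W J)" by (rule P)
    also have "\<dots> = W (K' + N b * J)"
      by (rule prepend_W[OF b K'(1) K'(2)])
    finally have WW: "W (K + N a * nat (g + int J)) = W (K' + N b * J)" .
    have "act (int (K + N a * nat (g + int J))) (Z (\<lambda>j. a j + b j))
       = W (K + N a * nat (g + int J)) (\<lambda>_. 0) (\<lambda>j. a j + b j)"
      by (rule W_0[OF ab, symmetric])
    also have "\<dots> = W (K' + N b * J) (\<lambda>_. 0) (\<lambda>j. a j + b j)" by (simp only: WW)
    also have "\<dots> = act (int (K' + N b * J)) (Z (\<lambda>j. a j + b j))" by (rule W_0[OF ab])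
    finally have "int (N (\<lambda>j. a j + b j)) dvd (int (K + N a * nat (g + int J)) - int (K' + N b * J))"
      by (rule act_eq_dvd[OF ab])
    then show ?thesis by (simp only: N_add)
  qed
  define J0 where "J0 = nat (- g)"
  have g0: "g + int J0 \<ge> 0" "g + int (J0 + 1) \<ge> 0" unfolding J0_def by auto
  define T where "T = nat (g + int J0)"
  have e: "nat (g + int (J0 + 1)) = T + 1" using g0 unfolding T_def by auto
  have d1: "int (N a * N b) dvd (int (K + N a * T) - int (K' + N b * J0))"
    using key[OF g0(1)] unfolding T_def .
  have d2: "int (N a * N b) dvd (int (K + N a * (T + 1)) - int (K' + N b * (J0 + 1)))"
    using key[OF g0(2)] unfolding e .
  have "(int (K + N a * (T + 1)) - int (K' + N b * (J0 + 1))) - (int (K + N a * T) - int (K' + N b * J0))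
      = int (N a) - int (N b)" by (simp add: algebra_simps)
  then have "int (N a * N b) dvd (int (N a) - int (N b))" using dvd_diff[OF d2 d1] by simp
  then have "int (N a) * int (N b) dvd (int (N a) - int (N b))" by simp
  then have "int (N a) = int (N b)" using dvd_eq_int[of "int (N a)" "int (N b)"] N_pos[of a] N_pos[of b] by simp
  then show ?thesis unfolding a_def b_def by simp
qed

end

theorem theorem7p5:
  fixes k :: nat and n :: "nat \<Rightarrow> nat" and L :: "('a, 'b) kgraph_scheme"
    and x :: "nat \<Rightarrow> nat \<Rightarrow> 'a" and act :: "int \<Rightarrow> 'a \<Rightarrow> 'a" and res :: "int \<Rightarrow> 'a \<Rightarrow> int"
  assumes "k \<ge> 1"
    and "\<forall>i<k. n i > 1"
    and "product_of_odometers k n L x act res"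
  shows "Per_GL k L act res = Per_L k L act res \<and>
         Per_L k L act res = {p \<in> Zk k. (\<Prod>i<k. (real (n i)) powi (p i)) = 1}"
proof -
  interpret O: odo k n L x act res using assms(2,3) by unfold_locales auto
  define R where "R = {p \<in> Zk k. (\<Prod>i<k. (real (n i)) powi (p i)) = 1}"
  have L_GL: "Per_L k L act res \<subseteq> Per_GL k L act res" unfolding Per_L_def Per_GL_def by blast
  have GL_R: "Per_GL k L act res \<subseteq> R"
  proof
    fix p assume "p \<in> Per_GL k L act res"
    then obtain \<mu> g \<nu> where p: "p = degdiff L \<mu> \<nu>" and cyc: "cycline k L act res \<mu> g \<nu>"
      unfolding Per_GL_def by blast
    have muM: "\<mu> \<in> Mor L" and nuM: "\<nu> \<in> Mor L" using cyc unfolding cycline_def by auto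
    have Neq: "O.N (deg L \<mu>) = O.N (deg L \<nu>)" by (rule O.B[OF cyc])
    have "p \<in> Zk k" using O.deg_Nk[OF muM] O.deg_Nk[OF nuM] unfolding p degdiff_def Zk_def Nk_def by auto
    moreover have "(\<Prod>i<k. (real (n i)) powi (p i)) = 1"
      unfolding p degdiff_def O.prod_powi using Neq O.N_pos[of "deg L \<nu>"] by simp
    ultimately show "p \<in> R" unfolding R_def by blast
  qed
  have R_L: "R \<subseteq> Per_L k L act res"
  proof
    fix p assume "p \<in> R"
    then have pZ: "p \<in> Zk k" and pr: "(\<Prod>i<k. (real (n i)) powi (p i)) = 1" unfolding R_def by auto
    define a where "a = (\<lambda>j. nat (p j))"
    define b where "b = (\<lambda>j. nat (- p j))"
    have a: "a \<in> Nk k" and b: "b \<in> Nk k" using pZ unfolding a_def b_def Zk_def Nk_def by auto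
    have pab: "p = (\<lambda>j. int (a j) - int (b j))" unfolding a_def b_def by (auto intro!: ext)
    have "real (O.N a) / real (O.N b) = 1" using pr unfolding pab O.prod_powi .
    then have Neq: "O.N a = O.N b" using O.N_pos[of b] by (simp add: divide_eq_1_iff)
    have ZaM: "O.Z a \<in> Mor L" and ZbM: "O.Z b \<in> Mor L" using O.Z_Mor a b by auto
    have da: "deg L (O.Z a) = a" and db: "deg L (O.Z b) = b" using O.Z_deg a b by auto
    have cyc: "cycline k L act res (O.Z a) 0 (O.Z b)"
      unfolding cycline_def
    proof (intro conjI ballI)
      show "O.Z a \<in> Mor L" "O.Z b \<in> Mor L" using ZaM ZbM .
      show "src L (O.Z a) = act 0 (src L (O.Z b))" using O.src_Mor ZaM ZbM O.act_v by simp
      fix xx assume "xx \<in> infpaths_from k L (src L (O.Z b))"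
      then have xx: "xx \<in> infpaths k L" unfolding infpaths_from_def by auto
      have "(\<lambda>y. y \<in> infpaths k L \<and> y (\<lambda>_. 0) a = O.Z a \<and>
          (\<forall>p q. in_Omega k p q \<longrightarrow> y (\<lambda>j. a j + p j) (\<lambda>j. a j + q j) = xx p q)) =
        (\<lambda>y. y \<in> infpaths k L \<and> y (\<lambda>_. 0) b = O.Z b \<and>
          (\<forall>p q. in_Omega k p q \<longrightarrow> y (\<lambda>j. b j + p j) (\<lambda>j. b j + q j) = xx p q))"
      proof (intro ext iffI)
        fix y assume h: "y \<in> infpaths k L \<and> y (\<lambda>_. 0) a = O.Z a \<and>
          (\<forall>p q. in_Omega k p q \<longrightarrow> y (\<lambda>j. a j + p j) (\<lambda>j. a j + q j) = xx p q)"
        then show "y \<in> infpaths k L \<and> y (\<lambda>_. 0) b = O.Z b \<and>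
          (\<forall>p q. in_Omega k p q \<longrightarrow> y (\<lambda>j. b j + p j) (\<lambda>j. b j + q j) = xx p q)"
          using O.C_dir[OF a b Neq xx, of y] by blast
      next
        fix y assume h: "y \<in> infpaths k L \<and> y (\<lambda>_. 0) b = O.Z b \<and>
          (\<forall>p q. in_Omega k p q \<longrightarrow> y (\<lambda>j. b j + p j) (\<lambda>j. b j + q j) = xx p q)"
        then show "y \<in> infpaths k L \<and> y (\<lambda>_. 0) a = O.Z a \<and>
          (\<forall>p q. in_Omega k p q \<longrightarrow> y (\<lambda>j. a j + p j) (\<lambda>j. a j + q j) = xx p q)"
          using O.C_dir[OF b a Neq[symmetric] xx, of y] by blast
      qed
      then show "prepend k L (O.Z a) (act_inf k act res 0 xx) = prepend k L (O.Z b) xx"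
        unfolding prepend_def O.act_inf_0[OF xx] da db by simp
    qed
    have "degdiff L (O.Z a) (O.Z b) = p" unfolding degdiff_def da db pab ..
    then show "p \<in> Per_L k L act res" using cyc unfolding Per_L_def by blast
  qed
  show ?thesis using L_GL GL_R R_L unfolding R_def by blast
qed

end
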